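(* In the slot formulation of the weighted balls-into-bins process, for every $0<a<\lambda/2$ and every $t\ge0$, $$\mathbb E\left[\Phi(x^s(t+1))-\Phi(x^s(t))\,\middle|\,x^s(t)\right]\le\sum_{i=1}^N\left(p_i\left(a+Sa^2\right)-\left(\frac aN-S\frac{a^2}{N^2}\right)\right)e^{a x^s_i(t)}.$$
   Context: Weighted balls into weighted bins: $n$ bins with positive integer weights $N_1,\dots,N_n$, $N=\sum_iN_i$; $\mathcal D$ on $[n]$ is $(\alpha,\beta)$-biased, i.e. $\frac{N_i}{\alpha N}\le\Pr_{\mathcal D}[i]\le\frac{\beta N_i}{N}$. Ball weights $w(t)$ are i.i.d. from $\mathcal W$ on $[0,\infty)$ with $\mathbb E[\mathcal W]=1$ and $M(z)=\mathbb E[e^{z\mathcal W}]$ finite at $z=\lambda$ for some $\lambda>0$; $S\ge1$ is a constant with $M''(z)\le2S$ for all $|z|<\lambda/2$. Each round two bins are sampled independently from $\mathcal D$ and the ball goes to the sampled bin with smaller value $v_i(t-1)=w_i(t-1)/N_i$ ($w_i(t)$ = total weight in bin $i$ after round $t$). Slot formulation: bin $i$ consists of $N_i$ unit slots, each with value $v_i(t)$; the normalized slot vector $x^s(t)\in\mathbb R^N$ has, for each slot of bin $i$, the entry $v_i(t)-\frac1N\sum_{t'\le t}w(t')$, and its entries are indexed in nonincreasing order $x^s_1(t)\ge\dots\ge x^s_N(t)$. Equivalently, each round two slots are drawn independently (a slot of bin $i$ with probability $\Pr_{\mathcal D}[i]/N_i$), the one later in the sorted order is selected, and the ball's weight is spread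 evenly over the slots of its bin. $p_i=p_i(t)$ is the conditional probability, given $x^s(t)$, that the selected slot in round $t+1$ is the $i$-th slot in the sorted order. For $a>0$ and $y\in\mathbb R^N$: $\Phi(y)=\sum_je^{ay_j}$, $\Psi(y)=\sum_je^{-ay_j}$, $\Gamma(y)=\Phi(y)+\Psi(y)$. *)

theory Defs
  imports "HOL-Probability.Probability"
begin

text \<open>Bins are 0,...,n-1 with weights Nw i; the load (total ball weight) of bin i is ld i.
  A slot is a pair (i,k) with i < n and k < Nw i.\<close>

definition slots :: "nat \<Rightarrow> (nat \<Rightarrow> nat) \<Rightarrow> (nat \<times> nat) set" where
  "slots n Nw = {(i, k). i < n \<and> k < Nw i}"

definition totN :: "nat \<Rightarrow> (nat \<Rightarrow> nat) \<Rightarrow> nat" where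
  "totN n Nw = (\<Sum>i<n. Nw i)"

definition bin_val :: "(nat \<Rightarrow> nat) \<Rightarrow> (nat \<Rightarrow> real) \<Rightarrow> nat \<Rightarrow> real" where
  "bin_val Nw ld i = ld i / real (Nw i)"

definition is_slot_sorting ::
  "nat \<Rightarrow> (nat \<Rightarrow> nat) \<Rightarrow> (nat \<Rightarrow> real) \<Rightarrow> (nat \<Rightarrow> nat \<times> nat) \<Rightarrow> bool" where
  "is_slot_sorting n Nw ld \<sigma> \<longleftrightarrow>
     bij_betw \<sigma> {..<totN n Nw} (slots n Nw) \<and>
     (\<forall>j j'. j \<le> j' \<and> j' < totN n Nw \<longrightarrow>
        bin_val Nw ld (fst (\<sigma> j')) \<le> bin_val Nw ld (fst (\<sigma> j)))"

text \<open>normalized slot vector x^s(t), indexed by sorted position (0-based);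
  the total weight thrown so far equals the total load.\<close>
definition slot_vec ::
  "nat \<Rightarrow> (nat \<Rightarrow> nat) \<Rightarrow> (nat \<Rightarrow> real) \<Rightarrow> (nat \<Rightarrow> nat \<times> nat) \<Rightarrow> nat \<Rightarrow> real" where
  "slot_vec n Nw ld \<sigma> j =
     bin_val Nw ld (fst (\<sigma> j)) - (\<Sum>i<n. ld i) / real (totN n Nw)"

definition Phi :: "real \<Rightarrow> nat \<Rightarrow> (nat \<Rightarrow> real) \<Rightarrow> real" where
  "Phi a K y = (\<Sum>j<K. exp (a * y j))"

definition slot_prob ::
  "(nat \<Rightarrow> real) \<Rightarrow> (nat \<Rightarrow> nat) \<Rightarrow> (nat \<Rightarrow> nat \<times> nat) \<Rightarrow> nat \<Rightarrow> real" where
  "slot_prob pD Nw \<sigma> j = pD (fst (\<sigma> j)) / real (Nw (fst (\<sigma> j)))"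

text \<open>p_i: probability that the selected slot (the later of two independent samples)
  is the slot at sorted position i\<close>
definition sel_prob ::
  "nat \<Rightarrow> (nat \<Rightarrow> nat) \<Rightarrow> (nat \<Rightarrow> real) \<Rightarrow> (nat \<Rightarrow> nat \<times> nat) \<Rightarrow> nat \<Rightarrow> real" where
  "sel_prob n Nw pD \<sigma> i =
     (\<Sum>j1<totN n Nw. \<Sum>j2<totN n Nw.
        if max j1 j2 = i then slot_prob pD Nw \<sigma> j1 * slot_prob pD Nw \<sigma> j2 else 0)"

text \<open>Phi of the normalized slot vector after a ball of weight w is placed into bin b
  (Phi is a symmetric function, so it is summed over all slots directly).\<close>
definition next_Phi ::
  "real \<Rightarrow> nat \<Rightarrow> (nat \<Rightarrow> nat) \<Rightarrow> (nat \<Rightarrow> real) \<Rightarrow> nat \<Rightarrow> real \<Rightarrow> real" where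
  "next_Phi a n Nw ld b w =
     (\<Sum>s\<in>slots n Nw.
        exp (a * ((ld(b := ld b + w)) (fst s) / real (Nw (fst s))
                   - ((\<Sum>i<n. ld i) + w) / real (totN n Nw))))"

text \<open>E[Phi(x^s(t+1)) - Phi(x^s(t)) | x^s(t)]: two slot positions j1, j2 drawn independently,
  the later one selected, ball weight drawn from W independently.\<close>
definition exp_change ::
  "real \<Rightarrow> nat \<Rightarrow> (nat \<Rightarrow> nat) \<Rightarrow> (nat \<Rightarrow> real) \<Rightarrow> real measure \<Rightarrow> (nat \<Rightarrow> real)
     \<Rightarrow> (nat \<Rightarrow> nat \<times> nat) \<Rightarrow> real" where
  "exp_change a n Nw pD W ld \<sigma> =
     (\<integral>w. (\<Sum>j1<totN n Nw. \<Sum>j2<totN n Nw.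
        slot_prob pD Nw \<sigma> j1 * slot_prob pD Nw \<sigma> j2 *
        (next_Phi a n Nw ld (fst (\<sigma> (max j1 j2))) w
         - Phi a (totN n Nw) (slot_vec n Nw ld \<sigma>))) \<partial>W)"

definition mgf :: "real measure \<Rightarrow> real \<Rightarrow> real" where
  "mgf W z = (\<integral>x. exp (z * x) \<partial>W)"

end

theory Submission
  imports Defs
begin

lemma pow_le_exp:
  fixes x d :: real
  assumes "0 \<le> x" "0 < d"
  shows "x ^ m \<le> (real m / d) ^ m * exp (d * x)"
proof (cases "m = 0")
  case True then show ?thesis using assms by simp
next
  case False
  have "d * x / real m \<le> exp (d * x / real m)"
    using exp_ge_add_one_self[of "d * x / real m"] by linarith
  then have "(d * x / real m) ^ m \<le> exp (d * x / real m) ^ m"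
    using assms False by (intro power_mono) auto
  also have "\<dots> = exp (d * x)"
    using False by (simp add: exp_of_nat_mult[symmetric])
  finally have *: "(d * x / real m) ^ m \<le> exp (d * x)" .
  have "x ^ m = (real m / d) ^ m * (d * x / real m) ^ m"
    using False assms by (simp add: power_mult_distrib[symmetric])
  also have "\<dots> \<le> (real m / d) ^ m * exp (d * x)"
    using * assms by (intro mult_left_mono) auto
  finally show ?thesis .
qed
lemma exp_diff_le:
  fixes u v :: real
  shows "\<bar>exp u - exp v\<bar> \<le> \<bar>u - v\<bar> * exp (max u v)"
proof -
  have key: "exp p - exp q \<le> (p - q) * exp p" if "q \<le> p" for p q :: real
  proof -
    have "exp q = exp p * exp (q - p)" by (simp add: exp_diff)
    also have "\<dots> \<ge> exp p * (1 + (q - p))"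
      by (intro mult_left_mono) (auto simp: exp_ge_add_one_self)
    finally show ?thesis by (simp add: algebra_simps)
  qed
  show ?thesis
  proof (cases "v \<le> u")
    case True
    with key[of v u] show ?thesis by (simp add: max_def)
  next
    case False
    with key[of u v] show ?thesis by (simp add: max_def abs_minus_commute)
  qed
qed

locale mgfW =
  fixes W :: "real measure" and lam :: real
  assumes W_prob: "prob_space W"
    and W_borel: "sets W = sets borel"
    and W_nonneg: "AE x in W. 0 \<le> x"
    and lam_pos: "0 < lam"
    and W_mgf: "integrable W (\<lambda>x. exp (lam * x))"
begin

definition F :: "nat \<Rightarrow> real \<Rightarrow> real" where
  "F k z = (\<integral>x. x ^ k * exp (z * x) \<partial>W)"

lemma meas[measurable]: "(\<lambda>x. x ^ k * exp (z * x)) \<in> borel_measurable W"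
  unfolding measurable_cong_sets[OF W_borel refl] by measurable

lemma integrable_F:
  assumes "z < lam"
  shows "integrable W (\<lambda>x. x ^ k * exp (z * x))"
proof -
  define c where "c = max 0 z"
  define d where "d = lam - c"
  have d: "0 < d" using assms lam_pos by (simp add: d_def c_def)
  show ?thesis
  proof (rule Bochner_Integration.integrable_bound)
  show "integrable W (\<lambda>x. (real k / d) ^ k * exp (lam * x))"
    using W_mgf by (rule integrable_mult_right)
  show "AE x in W. norm (x ^ k * exp (z * x)) \<le> norm ((real k / d) ^ k * exp (lam * x))"
    using W_nonneg
  proof eventually_elim
    case (elim x)
    have "norm (x ^ k * exp (z * x)) = x ^ k * exp (z * x)" using elim by (simp add: abs_mult)
    have zc: "z * x \<le> c * x" using elim by (intro mult_right_mono) (auto simp: c_def)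
    have "norm (x ^ k * exp (z * x)) = x ^ k * exp (z * x)" using elim by (simp add: abs_mult)
    also have "\<dots> \<le> x ^ k * exp (c * x)"
      using elim zc by (intro mult_left_mono) auto
    also have "\<dots> \<le> ((real k / d) ^ k * exp (d * x)) * exp (c * x)"
      using pow_le_exp[OF elim d, of k] by (intro mult_right_mono) auto
    also have "\<dots> = (real k / d) ^ k * exp (lam * x)"
      by (simp add: d_def mult_exp_exp left_diff_distrib)
    also have "\<dots> \<le> norm ((real k / d) ^ k * exp (lam * x))" by simp
    finally show ?case .
  qed
qed (rule meas)
qed


lemma DERIV_F:
  assumes "z < lam"
  shows "(F k has_real_derivative F (Suc k) z) (at z)"
proof -
  define c1 where "c1 = (z + lam) / 2"
  define c where "c = max 0 c1"
  have c1: "z < c1" "c1 \<le> c" "c < lam" using assms lam_pos by (auto simp: c1_def c_def)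
  have intw: "integrable W (\<lambda>x. x ^ Suc k * exp (c * x))" using integrable_F[OF c1(3)] .
  show ?thesis unfolding has_field_derivative_iff tendsto_at_iff_sequentially
  proof (intro allI impI)
    fix X :: "nat \<Rightarrow> real" assume X: "\<forall>i. X i \<in> UNIV - {z}" "X \<longlonglongrightarrow> z"
    have "eventually (\<lambda>i. X i < c1) sequentially" using order_tendstoD(2)[OF X(2) c1(1)] .
    then obtain N0 where N0: "\<And>i. N0 \<le> i \<Longrightarrow> X i < c1" by (auto simp: eventually_sequentially)
    define g where "g i x = (x ^ k * exp (X (i + N0) * x) - x ^ k * exp (z * x)) / (X (i + N0) - z)" for i x
    have Xne: "X i \<noteq> z" for i using X(1) by auto
    have XN: "X (i + N0) < c1" for i using N0 by auto
    have quot: "(F k (X (i + N0)) - F k z) / (X (i + N0) - z) = (\<integral>x. g i x \<partial>W)" for i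
    proof -
      have i1: "integrable W (\<lambda>x. x ^ k * exp (X (i + N0) * x))"
        using integrable_F[of "X (i + N0)"] XN[of i] c1 by auto
      have i2: "integrable W (\<lambda>x. x ^ k * exp (z * x))" using integrable_F assms by auto
      show ?thesis unfolding g_def F_def
        by (simp add: Bochner_Integration.integral_diff[OF i1 i2])
    qed
    have lim: "(\<lambda>i. \<integral>x. g i x \<partial>W) \<longlonglongrightarrow> (\<integral>x. x ^ Suc k * exp (z * x) \<partial>W)"
    proof (rule integral_dominated_convergence[where w="\<lambda>x. x ^ Suc k * exp (c * x)"])
      show "(\<lambda>x. x ^ Suc k * exp (z * x)) \<in> borel_measurable W" by (rule meas)
      show "g i \<in> borel_measurable W" for i
        unfolding g_def measurable_cong_sets[OF W_borel refl] by measurable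
      show "integrable W (\<lambda>x. x ^ Suc k * exp (c * x))" by (rule intw)
      show "AE x in W. (\<lambda>i. g i x) \<longlonglongrightarrow> x ^ Suc k * exp (z * x)"
      proof (rule AE_I2)
        fix x
        have D: "((\<lambda>y. x ^ k * exp (y * x)) has_real_derivative x ^ k * (exp (z * x) * x)) (at z)"
          by (auto intro!: derivative_eq_intros)
        have "(\<lambda>i. X (i + N0)) \<longlonglongrightarrow> z" using LIMSEQ_ignore_initial_segment[OF X(2)] .
        with D Xne have "((\<lambda>y. (x ^ k * exp (y * x) - x ^ k * exp (z * x)) / (y - z)) \<circ> (\<lambda>i. X (i + N0)))
              \<longlonglongrightarrow> x ^ k * (exp (z * x) * x)"
          unfolding has_field_derivative_iff tendsto_at_iff_sequentially by auto
        moreover have "x ^ k * (exp (z * x) * x) = x ^ Suc k * exp (z * x)" by (simp add: algebra_simps)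
        ultimately show "(\<lambda>i. g i x) \<longlonglongrightarrow> x ^ Suc k * exp (z * x)"
          by (simp only: g_def o_def)
      qed
      show "AE x in W. norm (g i x) \<le> x ^ Suc k * exp (c * x)" for i
        using W_nonneg
      proof eventually_elim
        case (elim x)
        let ?u = "X (i + N0) * x" and ?v = "z * x"
        have ne: "X (i + N0) - z \<noteq> 0" using Xne[of "i + N0"] by simp
        have mx: "max ?u ?v \<le> c * x"
          using elim XN[of i] c1 by (auto intro!: mult_right_mono)
        have "norm (g i x) = x ^ k * \<bar>exp ?u - exp ?v\<bar> / \<bar>X (i + N0) - z\<bar>"
          using elim by (simp add: g_def abs_mult right_diff_distrib[symmetric])
        also have "\<dots> \<le> x ^ k * (\<bar>?u - ?v\<bar> * exp (max ?u ?v)) / \<bar>X (i + N0) - z\<bar>"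
          using elim by (intro divide_right_mono mult_left_mono exp_diff_le) auto
        also have "\<dots> = x ^ k * x * exp (max ?u ?v)"
          using elim ne by (simp add: left_diff_distrib[symmetric] abs_mult)
        also have "\<dots> \<le> x ^ k * x * exp (c * x)"
          using elim mx by (intro mult_left_mono) auto
        also have "\<dots> = x ^ Suc k * exp (c * x)" by (simp add: algebra_simps)
        finally show ?case .
      qed
    qed
    have "(\<lambda>i. ((\<lambda>y. (F k y - F k z) / (y - z)) \<circ> X) (i + N0)) \<longlonglongrightarrow> F (Suc k) z"
      unfolding o_def quot by (simp only: F_def lim)
    then show "((\<lambda>y. (F k y - F k z) / (y - z)) \<circ> X) \<longlonglongrightarrow> F (Suc k) z"
      by (rule LIMSEQ_offset)
  qed
qed

lemma mgf_eq: "mgf W = F 0"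
  by (rule ext) (simp add: mgf_def F_def mult.commute)

lemma F0_0: "F 0 0 = 1"
  using W_prob by (simp add: F_def prob_space.prob_space)

lemma mgf_lower:
  assumes "z < lam" "(\<integral>x. x \<partial>W) = 1"
  shows "1 + z \<le> mgf W z"
proof -
  have fm: "finite_measure W" using W_prob by (simp add: prob_space.finite_measure)
  have ix: "integrable W (\<lambda>x. x)" using integrable_F[of 0 1] lam_pos by simp
  have izx: "integrable W (\<lambda>x. z * x)" using ix by (rule integrable_mult_right)
  have i1c: "integrable W (\<lambda>x. 1::real)" using fm by (rule finite_measure.integrable_const)
  have i1: "integrable W (\<lambda>x. 1 + z * x)"
    using i1c izx by (rule Bochner_Integration.integrable_add)
  have "(\<integral>x. 1 + z * x \<partial>W) = (\<integral>x. 1 \<partial>W) + (\<integral>x. z * x \<partial>W)"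
    using i1c izx by (rule Bochner_Integration.integral_add)
  also have "\<dots> = 1 + z"
    using W_prob assms(2) by (simp add: prob_space.prob_space)
  finally have e: "(\<integral>x. 1 + z * x \<partial>W) = 1 + z" .
  have "(\<integral>x. 1 + z * x \<partial>W) \<le> (\<integral>x. exp (z * x) \<partial>W)"
    using i1 integrable_F[OF assms(1), of 0]
    by (intro integral_mono) (auto simp: exp_ge_add_one_self)
  then show ?thesis unfolding mgf_def e .
qed

lemma mgf_upper:
  assumes mean: "(\<integral>x. x \<partial>W) = 1"
    and Sb: "\<forall>z. \<bar>z\<bar> < lam / 2 \<longrightarrow> deriv (deriv (mgf W)) z \<le> 2 * S"
    and z: "\<bar>z\<bar> < lam / 2"
  shows "mgf W z \<le> 1 + z + S * z\<^sup>2"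
proof (cases "z = 0")
  case True then show ?thesis using F0_0 mgf_eq by simp
next
  case False
  have F2: "F 2 y \<le> 2 * S" if "\<bar>y\<bar> < lam / 2" for y
  proof -
    have "y < lam" using that lam_pos by auto
    have d1: "deriv (F 0) u = F 1 u" if "u \<in> {..<lam}" for u
    proof -
      have "u < lam" using that by simp
      then show ?thesis using DERIV_F[of u 0] by (intro DERIV_imp_deriv) simp
    qed
    have D: "(F 1 has_real_derivative F 2 y) (at y)"
      using DERIV_F[of y 1] \<open>y < lam\<close> by (simp add: numeral_2_eq_2)
    have "(deriv (F 0) has_real_derivative F 2 y) (at y)"
      apply (rule has_field_derivative_transform_within_open[OF D, where S="{..<lam}"])
      using \<open>y < lam\<close> d1 by auto
    then have "deriv (deriv (mgf W)) y = F 2 y" unfolding mgf_eq by (rule DERIV_imp_deriv)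
    moreover have "deriv (deriv (mgf W)) y \<le> 2 * S" using Sb that by blast
    ultimately show ?thesis by simp
  qed
  have DD: "\<forall>m t. m < 2 \<and> - \<bar>z\<bar> \<le> t \<and> t \<le> \<bar>z\<bar> \<longrightarrow> DERIV (F m) t :> F (Suc m) t"
  proof (intro allI impI)
    fix m :: nat and t :: real assume "m < 2 \<and> - \<bar>z\<bar> \<le> t \<and> t \<le> \<bar>z\<bar>"
    then have "t < lam" using z lam_pos by auto
    then show "DERIV (F m) t :> F (Suc m) t" by (rule DERIV_F)
  qed
  have "\<exists>t. (if z < 0 then z < t \<and> t < 0 else 0 < t \<and> t < z) \<and>
    F 0 z = (\<Sum>m<2. (F m 0 / fact m) * (z - 0)^m) + (F 2 t / fact 2) * (z - 0)^2"
    by (rule Taylor[OF _ refl DD]) (use False in auto)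
  then obtain t where H: "(if z < 0 then z < t \<and> t < 0 else 0 < t \<and> t < z)"
    and eq: "F 0 z = (\<Sum>m<2. (F m 0 / fact m) * (z - 0)^m) + (F 2 t / fact 2) * (z - 0)^2"
    by blast
  have t: "\<bar>t\<bar> < \<bar>z\<bar>" using H by (auto split: if_splits)
  have F10: "F 1 0 = 1" using mean by (simp add: F_def)
  have eq2: "F 0 z = 1 + z + F 2 t / 2 * z\<^sup>2"
    using eq F0_0 F10 by (simp add: numeral_2_eq_2)
  have "F 2 t * z\<^sup>2 \<le> 2 * S * z\<^sup>2" using F2[of t] t z by (intro mult_right_mono) auto
  then show ?thesis unfolding mgf_eq eq2 by simp
qed
end

lemma scalar_key:
  fixes Nb N a S Mc Mm c :: real
  assumes "1 \<le> Nb" "Nb \<le> N" "0 < a" "0 \<le> S"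
    and "Mc \<le> 1 + c + S * c\<^sup>2" "1 - a / N \<le> Mm" "c = a * (1 / Nb - 1 / N)"
  shows "Nb * (Mc - Mm) \<le> a + S * a\<^sup>2"
proof -
  have N0: "0 < N" using assms by auto
  have inv: "1 / N \<le> 1 / Nb" using assms by (intro divide_left_mono) auto
  have c0: "0 \<le> c" using assms inv by simp
  have "c \<le> a * (1 / Nb)" unfolding assms(7) using assms N0 by (intro mult_left_mono) auto
  then have c1: "c \<le> a / Nb" by simp
  have "Nb * (Mc - Mm) \<le> Nb * (c + S * c\<^sup>2 + a / N)"
    using assms by (intro mult_left_mono) auto
  also have "\<dots> = a + S * (Nb * c\<^sup>2)"
    using assms N0 by (simp add: field_simps power2_eq_square)
  also have "Nb * c\<^sup>2 \<le> a\<^sup>2"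
  proof -
    have "c\<^sup>2 \<le> (a / Nb)\<^sup>2" using c0 c1 by (intro power_mono) auto
    then have "Nb * c\<^sup>2 \<le> Nb * (a / Nb)\<^sup>2" using assms by (intro mult_left_mono) auto
    also have "\<dots> = a\<^sup>2 / Nb" using assms by (simp add: power2_eq_square field_simps)
    also have "\<dots> \<le> a\<^sup>2" using assms by (simp add: divide_le_eq)
    finally show ?thesis .
  qed
  then have "a + S * (Nb * c\<^sup>2) \<le> a + S * a\<^sup>2" using assms by (simp add: mult_left_mono)
  finally show ?thesis .
qed

lemma arith1: fixes a u w m L N :: real
  shows "a*((u + w)/m - (L + w)/N) = a*(u/m - L/N) + a*(1/m - 1/N)*w"
  by (simp add: algebra_simps add_divide_distrib diff_divide_distrib)
lemma arith2: fixes a u w m L N :: real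
  shows "a*(u/m - (L + w)/N) = a*(u/m - L/N) + (- a/N)*w"
  by (simp add: algebra_simps add_divide_distrib diff_divide_distrib)

lemma slots_Sigma: "slots n Nw = Sigma {..<n} (\<lambda>i. {..<Nw i})"
  by (auto simp: slots_def)

theorem lemma3:
  fixes n :: nat and Nw :: "nat \<Rightarrow> nat" and pD :: "nat \<Rightarrow> real"
    and \<alpha> \<beta> lam S a :: real and W :: "real measure"
    and ld :: "nat \<Rightarrow> real" and \<sigma> :: "nat \<Rightarrow> nat \<times> nat"
  assumes bins_pos: "\<forall>i<n. 0 < Nw i"
    and D_sum: "(\<Sum>i<n. pD i) = 1"
    and D_nonneg: "\<forall>i<n. 0 \<le> pD i"
    and ab_pos: "0 < \<alpha>" "0 < \<beta>"
    and D_biased: "\<forall>i<n. real (Nw i) / (\<alpha> * real (totN n Nw)) \<le> pD i \<and>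
                          pD i \<le> \<beta> * real (Nw i) / real (totN n Nw)"
    and W_prob: "prob_space W"
    and W_borel: "sets W = sets borel"
    and W_nonneg: "AE x in W. 0 \<le> x"
    and W_mean: "(\<integral>x. x \<partial>W) = 1"
    and lam_pos: "0 < lam"
    and W_mgf: "integrable W (\<lambda>x. exp (lam * x))"
    and S_ge: "1 \<le> S"
    and S_bound: "\<forall>z. \<bar>z\<bar> < lam / 2 \<longrightarrow> deriv (deriv (mgf W)) z \<le> 2 * S"
    and a_pos: "0 < a" and a_small: "a < lam / 2"
    and loads: "\<forall>i<n. 0 \<le> ld i"
    and sorted: "is_slot_sorting n Nw ld \<sigma>"
  shows "exp_change a n Nw pD W ld \<sigma> \<le>
    (\<Sum>i<totN n Nw.
       (sel_prob n Nw pD \<sigma> i * (a + S * a\<^sup>2)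
        - (a / real (totN n Nw) - S * a\<^sup>2 / (real (totN n Nw))\<^sup>2))
       * exp (a * slot_vec n Nw ld \<sigma> i))"
proof -
  interpret mg: mgfW W lam using W_prob W_borel W_nonneg lam_pos W_mgf by (simp add: mgfW_def)
  define N where "N = totN n Nw"
  define b where "b j = fst (\<sigma> j)" for j
  define q where "q j = slot_prob pD Nw \<sigma> j" for j
  define x where "x j = slot_vec n Nw ld \<sigma> j" for j
  define p where "p i = sel_prob n Nw pD \<sigma> i" for i
  define L where "L = (\<Sum>i<n. ld i)"
  define A where "A = a + S * a\<^sup>2"
  define B where "B = a / real N - S * a\<^sup>2 / (real N)\<^sup>2"
  define Phi0 where "Phi0 = (\<Sum>j<N. exp (a * x j))"
  have fm: "finite_measure W" using W_prob by (simp add: prob_space.finite_measure)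
  have bij: "bij_betw \<sigma> {..<N} (slots n Nw)"
    using sorted by (simp add: is_slot_sorting_def N_def)
  have n_pos: "0 < n" using D_sum by (cases n) auto
  have Nge: "Nw i \<le> N" if "i < n" for i
    unfolding N_def totN_def using that by (intro member_le_sum) auto
  have N_pos: "0 < N" using Nge[of 0] bins_pos n_pos by fastforce
  have slot_j: "b j < n \<and> snd (\<sigma> j) < Nw (b j)" if "j < N" for j
    using bij_betw_apply[OF bij, of j] that by (auto simp: slots_def b_def split: prod.splits)
  have Nb_pos: "0 < Nw (b j)" if "j < N" for j using slot_j[OF that] by auto
  have q_nonneg: "0 \<le> q j" if "j < N" for j
    using slot_j[OF that] D_nonneg by (auto simp: q_def slot_prob_def b_def)
  have reidx: "(\<Sum>j<N. f (\<sigma> j)) = (\<Sum>s\<in>slots n Nw. f s)" for f :: "nat \<times> nat \<Rightarrow> real"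
    by (rule sum.reindex_bij_betw[OF bij])
  have q_sum: "(\<Sum>j<N. q j) = 1"
  proof -
    have "(\<Sum>j<N. q j) = (\<Sum>s\<in>slots n Nw. pD (fst s) / real (Nw (fst s)))"
      unfolding q_def slot_prob_def by (rule reidx)
    also have "\<dots> = (\<Sum>i<n. \<Sum>k<Nw i. pD i / real (Nw i))"
      unfolding slots_Sigma by (subst sum.Sigma) (auto simp: split_beta)
    also have "\<dots> = (\<Sum>i<n. pD i)"
      using bins_pos by (intro sum.cong) auto
    finally show ?thesis using D_sum by simp
  qed
  have x_eq: "x j = x i" if "b j = b i" for i j
    using that by (simp add: x_def slot_vec_def b_def)
  have cnt: "(\<Sum>j<N. if b j = \<beta>' then (1::real) else 0) = real (Nw \<beta>')" if "\<beta>' < n" for \<beta>'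
  proof -
    have "(\<Sum>j<N. if b j = \<beta>' then (1::real) else 0) = (\<Sum>s\<in>slots n Nw. if fst s = \<beta>' then 1 else 0)"
      unfolding b_def by (rule reidx)
    also have "\<dots> = (\<Sum>i<n. \<Sum>k<Nw i. if i = \<beta>' then 1 else 0)"
      unfolding slots_Sigma by (subst sum.Sigma) (auto simp: split_beta)
    also have "\<dots> = (\<Sum>i<n. if i = \<beta>' then real (Nw i) else 0)"
      by (intro sum.cong) auto
    also have "\<dots> = real (Nw \<beta>')" using that by simp
    finally show ?thesis .
  qed
  have conv: "(\<Sum>j1<N. \<Sum>j2<N. q j1 * q j2 * H (max j1 j2)) = (\<Sum>i<N. p i * H i)"
    for H :: "nat \<Rightarrow> real"
  proof -
    have "(\<Sum>i<N. p i * H i) =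
        (\<Sum>i<N. \<Sum>j1<N. \<Sum>j2<N. if max j1 j2 = i then q j1 * q j2 * H i else 0)"
      unfolding p_def sel_prob_def N_def[symmetric] q_def[symmetric]
      unfolding sum_distrib_right by (intro sum.cong refl) simp
    also have "\<dots> = (\<Sum>j1<N. \<Sum>j2<N. \<Sum>i<N. if max j1 j2 = i then q j1 * q j2 * H i else 0)"
      by (rule trans[OF sum.swap], rule sum.cong[OF refl], rule sum.swap)
    also have "\<dots> = (\<Sum>j1<N. \<Sum>j2<N. q j1 * q j2 * H (max j1 j2))"
      by (intro sum.cong refl) (auto simp: sum.delta max_def)
    finally show ?thesis by simp
  qed
  have p_sum: "(\<Sum>i<N. p i) = 1"
    using conv[of "\<lambda>_. 1"] q_sum by (simp add: sum_product[symmetric])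
  have p_nonneg: "0 \<le> p i" for i
    unfolding p_def sel_prob_def using q_nonneg
    by (intro sum_nonneg) (auto simp: q_def[symmetric] N_def[symmetric])
  define cb where "cb \<beta>' = a * (1 / real (Nw \<beta>') - 1 / real N)" for \<beta>'
  define cm where "cm = - a / real N"
  define cc where "cc \<beta>' j = (if b j = \<beta>' then cb \<beta>' else cm)" for \<beta>' j
  define E where "E \<beta>' w = (\<Sum>j<N. exp (a * x j) * exp (cc \<beta>' j * w))" for \<beta>' w
  define M where "M = mgf W"
  define G where "G \<beta>' = (\<Sum>j<N. exp (a * x j) * M (cc \<beta>' j))" for \<beta>'
  have invN: "1 / real N \<le> 1" using N_pos by simp
  have cb_b: "0 \<le> cb \<beta>' \<and> cb \<beta>' \<le> a" if "\<beta>' < n" for \<beta>'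
  proof -
    have "1 \<le> real (Nw \<beta>')" using bins_pos that by (simp add: Suc_le_eq)
    then have i1: "1 / real (Nw \<beta>') \<le> 1" by simp
    have i2: "1 / real N \<le> 1 / real (Nw \<beta>')"
      using Nge[OF that] bins_pos that by (intro divide_left_mono) auto
    have i3: "0 \<le> 1 / real N" by simp
    have "cb \<beta>' \<le> a * 1" unfolding cb_def using a_pos i1 i2 i3
      by (intro mult_left_mono) linarith+
    moreover have "0 \<le> cb \<beta>'" unfolding cb_def using a_pos i2 by simp
    ultimately show ?thesis by simp
  qed
  have cm_b: "\<bar>cm\<bar> < lam / 2" "cm < lam"
  proof -
    have "a / real N \<le> a" using N_pos a_pos by (simp add: divide_le_eq)
    moreover have "0 \<le> a / real N" using a_pos by simp
    moreover have "\<bar>cm\<bar> = a / real N" "cm = - (a / real N)" using a_pos by (simp_all add: cm_def)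
    ultimately show "\<bar>cm\<bar> < lam / 2" "cm < lam" using a_small a_pos lam_pos by linarith+
  qed
  have cc_lt: "cc \<beta>' j < lam" if "\<beta>' < n" for \<beta>' j
    using cb_b[OF that] cm_b a_small lam_pos by (auto simp: cc_def)
  have nP: "next_Phi a n Nw ld \<beta>' w = E \<beta>' w" if "\<beta>' < n" for \<beta>' w
  proof -
    have "next_Phi a n Nw ld \<beta>' w = (\<Sum>j<N. exp (a * ((ld(\<beta>' := ld \<beta>' + w)) (b j) / real (Nw (b j))
                   - ((\<Sum>i<n. ld i) + w) / real N)))"
      unfolding next_Phi_def b_def N_def
      by (rule reidx[unfolded N_def, symmetric])
    also have "\<dots> = E \<beta>' w" unfolding E_def
    proof (intro sum.cong refl)
      fix j assume "j \<in> {..<N}"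
      show "exp (a * ((ld(\<beta>' := ld \<beta>' + w)) (b j) / real (Nw (b j)) - ((\<Sum>i<n. ld i) + w) / real N))
          = exp (a * x j) * exp (cc \<beta>' j * w)"
      proof (cases "b j = \<beta>'")
        case True
        then show ?thesis
          by (simp add: arith1 x_def slot_vec_def bin_val_def b_def cc_def cb_def exp_add N_def)
      next
        case False
        then show ?thesis
          by (simp add: arith2 x_def slot_vec_def bin_val_def b_def cc_def cm_def mult_exp_exp N_def)
      qed
    qed
    finally show ?thesis .
  qed
  have intE: "integrable W (E \<beta>')" if "\<beta>' < n" for \<beta>'
    unfolding E_def
    using mg.integrable_F[OF cc_lt[OF that], of 0]
    by (intro Bochner_Integration.integrable_sum integrable_mult_right) simp
  have intEv: "(\<integral>w. E \<beta>' w \<partial>W) = G \<beta>'" if "\<beta>' < n" for \<beta>'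
  proof -
    have "(\<integral>w. E \<beta>' w \<partial>W) = (\<Sum>j<N. \<integral>w. exp (a * x j) * exp (cc \<beta>' j * w) \<partial>W)"
      unfolding E_def using mg.integrable_F[OF cc_lt[OF that], of 0]
      by (intro Bochner_Integration.integral_sum) (auto intro: integrable_mult_right)
    also have "\<dots> = G \<beta>'"
      unfolding G_def M_def mgf_def by simp
    finally show ?thesis .
  qed
  have PhiEq: "Phi a N (slot_vec n Nw ld \<sigma>) = Phi0" by (simp add: Phi_def Phi0_def x_def)
  have bmax: "b (max j1 j2) < n" if "j1 < N" "j2 < N" for j1 j2
    using slot_j[of "max j1 j2"] that by (auto simp: max_def)
  have ec: "exp_change a n Nw pD W ld \<sigma> =
      (\<integral>w. (\<Sum>j1<N. \<Sum>j2<N. q j1 * q j2 * (E (b (max j1 j2)) w - Phi0)) \<partial>W)"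
    unfolding exp_change_def N_def[symmetric] q_def[symmetric] b_def[symmetric] PhiEq
    using nP bmax by (intro Bochner_Integration.integral_cong refl sum.cong) auto
  have intT: "integrable W (\<lambda>w. q j1 * q j2 * (E (b (max j1 j2)) w - Phi0))"
    if "j1 < N" "j2 < N" for j1 j2
    using intE[OF bmax[OF that]] fm
    by (intro integrable_mult_right Bochner_Integration.integrable_diff finite_measure.integrable_const)
  have valT: "(\<integral>w. q j1 * q j2 * (E (b (max j1 j2)) w - Phi0) \<partial>W)
      = q j1 * q j2 * (G (b (max j1 j2)) - Phi0)" if "j1 < N" "j2 < N" for j1 j2
    using intE[OF bmax[OF that]] fm intEv[OF bmax[OF that]] W_prob
    by (simp add: Bochner_Integration.integral_diff finite_measure.integrable_const prob_space.prob_space)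
  have ec2: "exp_change a n Nw pD W ld \<sigma> =
      (\<Sum>j1<N. \<Sum>j2<N. q j1 * q j2 * (G (b (max j1 j2)) - Phi0))"
  proof -
    have "exp_change a n Nw pD W ld \<sigma> =
      (\<Sum>j1<N. \<integral>w. (\<Sum>j2<N. q j1 * q j2 * (E (b (max j1 j2)) w - Phi0)) \<partial>W)"
      unfolding ec using intT
      by (intro Bochner_Integration.integral_sum Bochner_Integration.integrable_sum) auto
    also have "\<dots> = (\<Sum>j1<N. \<Sum>j2<N. \<integral>w. q j1 * q j2 * (E (b (max j1 j2)) w - Phi0) \<partial>W)"
      using intT by (intro sum.cong refl Bochner_Integration.integral_sum) auto
    also have "\<dots> = (\<Sum>j1<N. \<Sum>j2<N. q j1 * q j2 * (G (b (max j1 j2)) - Phi0))"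
      using valT by (intro sum.cong refl) auto
    finally show ?thesis .
  qed
  have Mcm_up: "M cm \<le> 1 - B"
  proof -
    have "M cm \<le> 1 + cm + S * cm\<^sup>2"
      unfolding M_def using mg.mgf_upper[OF W_mean S_bound cm_b(1)] .
    also have "\<dots> = 1 - B" by (simp add: cm_def B_def power2_eq_square)
    finally show ?thesis .
  qed
  have Phi0_nonneg: "0 \<le> Phi0" unfolding Phi0_def by (intro sum_nonneg) simp
  have Gb: "G (b i) - Phi0 \<le> - B * Phi0 + A * exp (a * x i)" if "i < N" for i
  proof -
    have bi: "b i < n" using slot_j[OF that] by simp
    have "G (b i) = (\<Sum>j<N. exp (a * x j) * M cm
        + exp (a * x i) * (M (cb (b i)) - M cm) * (if b j = b i then 1 else 0))"
      unfolding G_def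
    proof (intro sum.cong refl)
      fix j assume "j \<in> {..<N}"
      show "exp (a * x j) * M (cc (b i) j) = exp (a * x j) * M cm
        + exp (a * x i) * (M (cb (b i)) - M cm) * (if b j = b i then 1 else 0)"
        using x_eq[of j i] by (cases "b j = b i") (simp_all add: cc_def algebra_simps)
    qed
    also have "\<dots> = M cm * Phi0 + exp (a * x i) * (M (cb (b i)) - M cm) * real (Nw (b i))"
      by (simp add: sum.distrib sum_distrib_left[symmetric] sum_distrib_right[symmetric]
          cnt[OF bi] Phi0_def mult.commute)
    finally have G: "G (b i) = M cm * Phi0 + exp (a * x i) * (real (Nw (b i)) * (M (cb (b i)) - M cm))"
      by simp
    have up: "M (cb (b i)) \<le> 1 + cb (b i) + S * (cb (b i))\<^sup>2"
      unfolding M_def using cb_b[OF bi] a_small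
      by (intro mg.mgf_upper[OF W_mean S_bound]) auto
    have lo: "1 - a / real N \<le> M cm"
      using mg.mgf_lower[OF cm_b(2) W_mean] unfolding M_def cm_def by simp
    have key: "real (Nw (b i)) * (M (cb (b i)) - M cm) \<le> A"
      unfolding A_def
      by (rule scalar_key[OF _ _ a_pos _ up lo cb_def])
         (use Nb_pos[OF that] Nge[OF bi] S_ge in auto)
    have "M cm * Phi0 - Phi0 \<le> - B * Phi0"
      using mult_right_mono[OF Mcm_up Phi0_nonneg] by (simp add: algebra_simps)
    moreover have "exp (a * x i) * (real (Nw (b i)) * (M (cb (b i)) - M cm)) \<le> exp (a * x i) * A"
      using key by (intro mult_left_mono) auto
    then have "exp (a * x i) * (real (Nw (b i)) * (M (cb (b i)) - M cm)) \<le> A * exp (a * x i)"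
      by (simp only: mult.commute)
    ultimately show ?thesis unfolding G by linarith
  qed
  have "exp_change a n Nw pD W ld \<sigma> = (\<Sum>i<N. p i * (G (b i) - Phi0))"
    unfolding ec2 by (rule conv)
  also have "\<dots> \<le> (\<Sum>i<N. p i * (- B * Phi0 + A * exp (a * x i)))"
    using Gb p_nonneg by (intro sum_mono mult_left_mono) auto
  also have "\<dots> = - B * Phi0 * (\<Sum>i<N. p i) + (\<Sum>i<N. p i * A * exp (a * x i))"
    by (simp add: sum.distrib sum_distrib_left sum_distrib_right sum_negf sum_subtractf algebra_simps)
  also have "\<dots> = (\<Sum>i<N. (p i * A - B) * exp (a * x i))"
    unfolding p_sum Phi0_def
    by (simp add: sum_subtractf left_diff_distrib sum_distrib_left sum_negf)
  finally show ?thesis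
    unfolding p_def x_def A_def B_def N_def by simp
qed

end
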